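(* In the standing setup below, every $\phi\in\mathrm{Dr}_1(\mathbf{A}_{\mathcal H},L)$ is $\overline L$-isomorphic to some $\psi\in\mathrm{Dr}_1(\mathbf{A}_{\mathcal H},L)$ with $\psi_{\overline Y}=\tau_L$.
   Context: Standing setup: $\mathbb{F}_q$ is the finite field with $q$ elements. Let $d\ge5$ be odd, $m$ a positive divisor of $d$, $p\in\mathbb{F}_q[X]$ monic irreducible of degree $d/m$, $f=\alpha p^m$ with $\alpha\in\mathbb{F}_q^\times$, and $h\in\mathbb{F}_q[X]$ nonzero of degree $\le(d-1)/2$ and not divisible by $p$. Let $\xi=Y^2+h(X)Y-f(X)$ and assume the affine plane curve $\mathcal H:\xi=0$ is nonsingular. Let $\mathbf{A}_{\mathcal H}=\mathbb{F}_q[X][Y]/(\xi)$, $\mathfrak{p}=\langle p(\overline X),\overline Y\rangle$, $L$ a degree-$m$ extension of $\mathbf{A}_{\mathcal H}/\mathfrak{p}$ (so $[L:\mathbb{F}_q]=d$), $\gamma:\mathbf{A}_{\mathcal H}\to\mathbf{A}_{\mathcal H}/\mathfrak{p}\hookrightarrow L$. $L\{\tau\}$ is the Ore polynomial ring with $\tau a=a^q\tau$; $\tau_L=\tau^d$. A Drinfeld $\mathbf{A}_{\mathcal H}$-module over $L$ is an $\mathbb{F}_q$-algebra morphism $\phi:\mathbf{A}_{\mathcal H}\to L\{\tau\}$ with constant coefficient of $\phi_a$ equal to $\gamma(a)$ and some $\phi_a$ nonconstant; rank $1$ means $\deg_\tau\phi_a=\log_q\#(\mathbf{A}_{\mathcal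 H}/a\mathbf{A}_{\mathcal H})$ for all $a\ne0$; $\mathrm{Dr}_1(\mathbf{A}_{\mathcal H},L)$ is the set of these. $\phi,\psi$ are $\overline L$-isomorphic if $\lambda\phi_a\lambda^{-1}=\psi_a$ for all $a$, for some $\lambda\in\overline L^\times$. *)

theory Defs
  imports "HOL-Algebra.Algebraic_Closure_Type"
begin

text \<open>Elements of A_H = F_q[X][Y]/(Y^2 + h Y - f) are represented uniquely as
  pairs (a0, a1) standing for a0 + a1 * Ybar (xi is monic of degree 2 in Y).\<close>

definition hadd :: "'a::comm_ring_1 poly \<times> 'a poly \<Rightarrow> 'a poly \<times> 'a poly \<Rightarrow> 'a poly \<times> 'a poly" where
  "hadd a b = (fst a + fst b, snd a + snd b)"

definition hsub :: "'a::comm_ring_1 poly \<times> 'a poly \<Rightarrow> 'a poly \<times> 'a poly \<Rightarrow> 'a poly \<times> 'a poly" where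
  "hsub a b = (fst a - fst b, snd a - snd b)"

text \<open>Multiplication using Ybar^2 = f - h * Ybar.\<close>
definition hmul :: "'a::comm_ring_1 poly \<Rightarrow> 'a poly \<Rightarrow>
    'a poly \<times> 'a poly \<Rightarrow> 'a poly \<times> 'a poly \<Rightarrow> 'a poly \<times> 'a poly" where
  "hmul h f a b = (fst a * fst b + snd a * snd b * f,
                   fst a * snd b + snd a * fst b - snd a * snd b * h)"

definition hone :: "'a::comm_ring_1 poly \<times> 'a poly" where
  "hone = (1, 0)"

definition Ybar :: "'a::comm_ring_1 poly \<times> 'a poly" where
  "Ybar = (0, 1)"

definition quot_card :: "'a::comm_ring_1 poly \<Rightarrow> 'a poly \<Rightarrow> 'a poly \<times> 'a poly \<Rightarrow> nat" where
  "quot_card h f a = card (UNIV // {(x, y). \<exists>c. hsub x y = hmul h f a c})"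

text \<open>Ore polynomials K{tau} with tau c = c^q tau, represented by coefficient
  polynomials; multiplication (sum a_i tau^i)(sum b_j tau^j) = sum a_i b_j^(q^i) tau^(i+j).\<close>
definition ore_mult :: "nat \<Rightarrow> 'k::comm_ring_1 poly \<Rightarrow> 'k poly \<Rightarrow> 'k poly" where
  "ore_mult q P Q = (\<Sum>i\<le>degree P. monom (coeff P i) i * map_poly (\<lambda>b. b ^ (q ^ i)) Q)"

text \<open>gamma : A_H -> A_H/p -> L, where the embedding F_q[X]/(p) -> L sends Xbar to theta.\<close>
definition gamma_map :: "('a::field \<Rightarrow> 'l::field) \<Rightarrow> 'l \<Rightarrow> 'a poly \<times> 'a poly \<Rightarrow> 'l" where
  "gamma_map \<iota> \<theta> a = poly (map_poly \<iota> (fst a)) \<theta>"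

definition is_drinfeld_rank1 ::
  "'a::{finite,field} poly \<Rightarrow> 'a poly \<Rightarrow> ('a \<Rightarrow> 'l::field) \<Rightarrow> 'l \<Rightarrow>
   ('a poly \<times> 'a poly \<Rightarrow> 'l poly) \<Rightarrow> bool" where
  "is_drinfeld_rank1 h f \<iota> \<theta> \<phi> \<longleftrightarrow>
     (\<forall>a b. \<phi> (hadd a b) = \<phi> a + \<phi> b) \<and>
     (\<forall>a b. \<phi> (hmul h f a b) = ore_mult (card (UNIV :: 'a set)) (\<phi> a) (\<phi> b)) \<and>
     \<phi> hone = 1 \<and>
     (\<forall>c. \<phi> ([:c:], 0) = [:\<iota> c:]) \<and>
     (\<forall>a. coeff (\<phi> a) 0 = gamma_map \<iota> \<theta> a) \<and>
     (\<exists>a. degree (\<phi> a) > 0) \<and>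
     (\<forall>a. a \<noteq> (0, 0) \<longrightarrow> (card (UNIV :: 'a set)) ^ degree (\<phi> a) = quot_card h f a)"

definition Lbar_isomorphic ::
  "nat \<Rightarrow> ('b \<Rightarrow> 'l::field poly) \<Rightarrow> ('b \<Rightarrow> 'l poly) \<Rightarrow> bool" where
  "Lbar_isomorphic q \<phi> \<psi> \<longleftrightarrow>
     (\<exists>lam::'l alg_closure. lam \<noteq> 0 \<and>
        (\<forall>a. ore_mult q (ore_mult q [:lam:] (map_poly to_ac (\<phi> a))) [:inverse lam:]
             = map_poly to_ac (\<psi> a)))"

definition nonsingular_curve :: "'a::field poly \<Rightarrow> 'a poly \<Rightarrow> bool" where
  "nonsingular_curve h f \<longleftrightarrow>
     (\<forall>x y :: 'a alg_closure.
        let h' = map_poly to_ac h; f' = map_poly to_ac f in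
        \<not> (y ^ 2 + poly h' x * y - poly f' x = 0 \<and>
           poly (pderiv h') x * y - poly (pderiv f') x = 0 \<and>
           2 * y + poly h' x = 0))"

end

theory Submission
  imports Defs "HOL-Computational_Algebra.Polynomial_Factorial"
begin


lemma ore_coeff:
  assumes "q > 0"
  shows "coeff (ore_mult q P Q) n = (\<Sum>i\<le>n. coeff P i * coeff Q (n - i) ^ (q ^ i))"
proof -
  define g where "g i = (if i \<le> n then coeff P i * coeff Q (n - i) ^ (q ^ i) else 0)" for i
  have z: "(0::'a) ^ (q ^ i) = 0" for i using assms by (simp add: zero_power)
  have "coeff (ore_mult q P Q) n = (\<Sum>i\<le>degree P. g i)"
  proof -
    have cm: "coeff (map_poly (\<lambda>b. b ^ (q ^ i)) Q) k = coeff Q k ^ (q ^ i)" for i k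
      by (rule coeff_map_poly) (use z in simp)
    show ?thesis
      unfolding ore_mult_def g_def coeff_sum coeff_monom_mult
      by (rule sum.cong) (auto simp: cm)
  qed
  also have "\<dots> = (\<Sum>i\<le>degree P + n. g i)"
    by (rule sum.mono_neutral_left) (auto simp: g_def coeff_eq_0)
  also have "\<dots> = (\<Sum>i\<le>n. g i)"
    by (rule sum.mono_neutral_right) (auto simp: g_def)
  finally show ?thesis by (simp add: g_def)
qed

lemma ore_single_left:
  assumes "q > 0" "\<forall>i. i \<noteq> j \<longrightarrow> coeff P i = 0"
  shows "coeff (ore_mult q P Q) n = (if j \<le> n then coeff P j * coeff Q (n - j) ^ (q ^ j) else 0)"
proof -
  have "coeff (ore_mult q P Q) n = (\<Sum>i\<le>n. if i = j then coeff P j * coeff Q (n - j) ^ (q ^ j) else 0)"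
    unfolding ore_coeff[OF assms(1)] by (rule sum.cong) (use assms(2) in auto)
  then show ?thesis by simp
qed

lemma ore_single_right:
  assumes "q > 0" "\<forall>i. i \<noteq> j \<longrightarrow> coeff Q i = 0"
  shows "coeff (ore_mult q P Q) n = (if j \<le> n then coeff P (n - j) * coeff Q j ^ (q ^ (n - j)) else 0)"
proof -
  have z: "(0::'a) ^ (q ^ i) = 0" for i using assms by (simp add: zero_power)
  have "coeff (ore_mult q P Q) n = (\<Sum>i\<le>n. if i = n - j then (if j \<le> n then coeff P (n - j) * coeff Q j ^ (q ^ (n - j)) else 0) else 0)"
    unfolding ore_coeff[OF assms(1)] by (rule sum.cong) (use assms(2) z in auto)
  then show ?thesis by simp
qed

lemma ore_low_right:
  assumes "q > 0" "\<forall>j<k. coeff Q j = 0"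
  shows "coeff (ore_mult q P Q) k = coeff P 0 * coeff Q k"
proof -
  have z: "(0::'a) ^ (q ^ i) = 0" for i using assms by (simp add: zero_power)
  have "coeff (ore_mult q P Q) k = (\<Sum>i\<le>k. if i = 0 then coeff P 0 * coeff Q k else 0)"
    unfolding ore_coeff[OF assms(1)] by (rule sum.cong) (use assms(2) z in auto)
  then show ?thesis by simp
qed

lemma ore_low_left:
  assumes "q > 0" "\<forall>i<k. coeff P i = 0"
  shows "coeff (ore_mult q P Q) k = coeff P k * coeff Q 0 ^ (q ^ k)"
proof -
  have "coeff (ore_mult q P Q) k = (\<Sum>i\<le>k. if i = k then coeff P k * coeff Q 0 ^ (q ^ k) else 0)"
    unfolding ore_coeff[OF assms(1)] by (rule sum.cong) (use assms(2) in auto)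
  then show ?thesis by simp
qed

lemma ore_low_bound:
  assumes "q > 0" "\<forall>i<a. coeff P i = 0" "\<forall>j<b. coeff Q j = 0"
  shows "\<forall>n<a+b. coeff (ore_mult q P Q) n = 0"
proof (intro allI impI)
  fix n assume n: "n < a + b"
  have z: "(0::'a) ^ (q ^ i) = 0" for i using assms by (simp add: zero_power)
  show "coeff (ore_mult q P Q) n = 0"
    unfolding ore_coeff[OF assms(1)]
  proof (rule sum.neutral, intro ballI)
    fix i assume "i \<in> {..n}"
    show "coeff P i * coeff Q (n - i) ^ q ^ i = 0"
    proof (cases "i < a")
      case True then show ?thesis using assms(2) by simp
    next
      case False then have "n - i < b" using n \<open>i \<in> {..n}\<close> by auto
      then show ?thesis using assms(3) z by simp
    qed
  qed
qed

lemma ff_pow_card: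
  fixes x :: "'a :: {finite, field}"
  shows   "x ^ card (UNIV :: 'a set) = x"
proof (cases "x = 0")
  case False
  have "x * (\<Prod>y\<in>UNIV-{0}. x * y) = x * x ^ (card (UNIV :: 'a set) - 1) * \<Prod>(UNIV-{0})"
    by (simp add: prod.distrib mult_ac)
  also have "x * x ^ (card (UNIV :: 'a set) - 1) = x ^ Suc (card (UNIV :: 'a set) - 1)"
    by (subst power_Suc) auto
  also have "Suc (card (UNIV :: 'a set) - 1) = card (UNIV :: 'a set)"
    using finite_UNIV_card_ge_0[where ?'a = 'a] by simp
  also have "(\<Prod>y\<in>UNIV-{0}. x * y) = (\<Prod>y\<in>UNIV-{0}. y)"
    by (rule prod.reindex_bij_witness[of _ "\<lambda>y. y / x" "\<lambda>y. x * y"]) (use False in auto)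
  finally show ?thesis
    by simp
qed (use finite_UNIV_card_ge_0[where ?'a = 'a] in auto)

lemma card_ge2: "card (UNIV :: 'a :: {finite, field} set) \<ge> 2"
proof -
  have "card {0::'a, 1} = 2" by simp
  moreover have "card {0::'a, 1} \<le> card (UNIV :: 'a set)" by (rule card_mono) auto
  ultimately show ?thesis by simp
qed

lemma roots_xN:
  assumes "N \<ge> 2"
  shows "finite {x::'k::idom. x ^ N = x} \<and> card {x::'k. x ^ N = x} \<le> N"
proof -
  define P :: "'k poly" where "P = monom 1 N - [:0,1:]"
  have ev: "{x. poly P x = 0} = {x. x ^ N = x}" by (auto simp: P_def poly_monom)
  obtain N' where N': "N = Suc (Suc N')" using assms by (metis add_2_eq_Suc le_Suc_ex)
  have "coeff P N = 1" by (simp add: P_def N' coeff_monom)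
  then have P0: "P \<noteq> 0" by auto
  have "degree P \<le> N" unfolding P_def
    by (rule order.trans[OF degree_diff_le_max]) (auto simp: degree_monom_le N' degree_pCons_le)
  then show ?thesis using poly_roots_finite[OF P0] card_poly_roots_bound[OF P0] ev by auto
qed

lemma card_Pn: "card {g::'a::{finite,zero} poly. \<forall>i\<ge>n. coeff g i = 0} = card (UNIV::'a set) ^ n"
proof (induction n)
  case 0
  have "{g::'a poly. \<forall>i\<ge>0. coeff g i = 0} = {0}" by (auto intro: poly_eqI)
  then show ?case by simp
next
  case (Suc n)
  have eq: "{g::'a poly. \<forall>i\<ge>Suc n. coeff g i = 0} = (\<lambda>(c,g). pCons c g) ` (UNIV \<times> {g. \<forall>i\<ge>n. coeff g i = 0})"
  proof (intro equalityI subsetI)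
    fix g :: "'a poly" assume g: "g \<in> {g. \<forall>i\<ge>Suc n. coeff g i = 0}"
    obtain a r where gr: "g = pCons a r" by (cases g)
    have "\<forall>i\<ge>n. coeff r i = 0"
    proof (intro allI impI)
      fix i assume "i \<ge> n" then have "coeff g (Suc i) = 0" using g by simp
      then show "coeff r i = 0" by (simp add: gr)
    qed
    then show "g \<in> (\<lambda>(c,g). pCons c g) ` (UNIV \<times> {g. \<forall>i\<ge>n. coeff g i = 0})"
      using gr by auto
  next
    fix g :: "'a poly" assume "g \<in> (\<lambda>(c,g). pCons c g) ` (UNIV \<times> {g. \<forall>i\<ge>n. coeff g i = 0})"
    then obtain a r where gr: "g = pCons a r" and r: "\<forall>i\<ge>n. coeff r i = 0" by auto
    show "g \<in> {g. \<forall>i\<ge>Suc n. coeff g i = 0}"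
    proof (intro CollectI allI impI)
      fix i assume "Suc n \<le> i"
      then obtain j where "i = Suc j" "j \<ge> n" by (cases i) auto
      then show "coeff g i = 0" using r by (simp add: gr)
    qed
  qed
  have inj: "inj_on (\<lambda>(c,g). pCons c g) (UNIV \<times> {g::'a poly. \<forall>i\<ge>n. coeff g i = 0})"
    by (auto simp: inj_on_def)
  show ?case unfolding eq card_image[OF inj] card_cartesian_product Suc by simp
qed

lemma card_quot_fun: "card (UNIV // {(x, y). K x = K y}) = card (range K)"
proof -
  have "UNIV // {(x, y). K x = K y} = (\<lambda>v. K -` {v}) ` range K"
  proof -
    have "{y. K x = K y} = K -` {K x}" for x by auto
    then show ?thesis unfolding quotient_def by auto
  qed
  moreover have "inj_on (\<lambda>v. K -` {v}) (range K)"
    by (auto simp: inj_on_def)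
  ultimately show ?thesis by (simp add: card_image)
qed



lemma quot_card_Ybar:
  fixes h f :: "'a::{finite,field} poly"
  assumes "f \<noteq> 0"
  shows "quot_card h f Ybar = card (UNIV::'a set) ^ degree f"
proof -
  have R: "{(x,y). \<exists>c. hsub x y = hmul h f Ybar c} = {(x::'a poly \<times> 'a poly,y::'a poly \<times> 'a poly). fst x mod f = fst y mod f}"
  proof (intro equalityI subsetI)
    fix z :: "('a poly \<times> 'a poly) \<times> ('a poly \<times> 'a poly)" assume "z \<in> {(x,y). \<exists>c. hsub x y = hmul h f Ybar c}"
    then obtain x y :: "'a poly \<times> 'a poly" and c where z: "z = (x,y)" and c: "hsub x y = hmul h f Ybar c" by auto
    then have "fst x - fst y = snd c * f" by (auto simp: hsub_def hmul_def Ybar_def)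
    then have "f dvd fst x - fst y" by simp
    then show "z \<in> {(x,y). fst x mod f = fst y mod f}" using z by (simp add: mod_eq_dvd_iff)
  next
    fix z :: "('a poly \<times> 'a poly) \<times> ('a poly \<times> 'a poly)" assume "z \<in> {(x,y). fst x mod f = fst y mod f}"
    then obtain x y :: "'a poly \<times> 'a poly" where z: "z = (x,y)" and e: "fst x mod f = fst y mod f" by auto
    then have "f dvd fst x - fst y" by (simp add: mod_eq_dvd_iff)
    then obtain k where k0: "fst x - fst y = f * k" by (auto elim: dvdE)
    have k: "fst x - fst y = k * f" using k0 by (simp add: mult.commute)
    have "hsub x y = hmul h f Ybar (snd x - snd y + k * h, k)"
      unfolding hsub_def hmul_def Ybar_def using k by simp
    then show "z \<in> {(x,y). \<exists>c. hsub x y = hmul h f Ybar c}" using z by auto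
  qed
  have rng: "range (\<lambda>x::'a poly \<times> 'a poly. fst x mod f) = {g. \<forall>i\<ge>degree f. coeff g i = 0}"
  proof (intro equalityI subsetI)
    fix g :: "'a poly" assume "g \<in> range (\<lambda>x::'a poly \<times> 'a poly. fst x mod f)"
    then obtain x :: "'a poly \<times> 'a poly" where g: "g = fst x mod f" by auto
    have "fst x mod f = 0 \<or> degree (fst x mod f) < degree f" by (rule degree_mod_less[OF assms])
    then have "\<forall>i\<ge>degree f. coeff g i = 0"
    proof
      assume "fst x mod f = 0" then show ?thesis using g by simp
    next
      assume dl: "degree (fst x mod f) < degree f"
      show ?thesis
      proof (intro allI impI)
        fix i assume "i \<ge> degree f"
        then have "degree (fst x mod f) < i" using dl by simp
        then show "coeff g i = 0" using g coeff_eq_0 by simp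
      qed
    qed
    then show "g \<in> {g. \<forall>i\<ge>degree f. coeff g i = 0}" by simp
  next
    fix g :: "'a poly" assume g: "g \<in> {g. \<forall>i\<ge>degree f. coeff g i = 0}"
    have "g mod f = g"
    proof (cases "g = 0")
      case False
      then have "coeff g (degree g) \<noteq> 0" by simp
      have "degree g < degree f"
      proof (rule ccontr)
        assume "\<not> degree g < degree f"
        then have "degree f \<le> degree g" by simp
        then have "coeff g (degree g) = 0" using g by simp
        then show False using \<open>coeff g (degree g) \<noteq> 0\<close> by simp
      qed
      then show ?thesis by (rule mod_poly_less)
    qed simp
    then have "g = (\<lambda>x::'a poly \<times> 'a poly. fst x mod f) (g, 0)" by simp
    then show "g \<in> range (\<lambda>x::'a poly \<times> 'a poly. fst x mod f)"
      by (rule range_eqI)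
  qed
  have "quot_card h f Ybar = card (UNIV // {(x::'a poly \<times> 'a poly, y). (\<lambda>x. fst x mod f) x = (\<lambda>x. fst x mod f) y})"
    unfolding quot_card_def R by simp
  also have "\<dots> = card (range (\<lambda>x::'a poly \<times> 'a poly. fst x mod f))" by (rule card_quot_fun)
  also have "\<dots> = card (UNIV::'a set) ^ degree f" unfolding rng by (rule card_Pn)
  finally show ?thesis .
qed

lemma fixed_in_range:
  fixes x :: "'l::{finite,field} alg_closure"
  assumes "x ^ card (UNIV::'l set) = x"
  shows "x \<in> range to_ac"
proof -
  define Q where "Q = card (UNIV::'l set)"
  have Q2: "Q \<ge> 2" unfolding Q_def by (rule card_ge2)
  define S where "S = {x::'l alg_closure. x ^ Q = x}"
  have fS: "finite S" and cS: "card S \<le> Q" using roots_xN[OF Q2] unfolding S_def by auto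
  have sub: "range to_ac \<subseteq> S"
  proof
    fix z assume "z \<in> range (to_ac :: 'l \<Rightarrow> _)"
    then obtain y :: 'l where "z = to_ac y" by auto
    then have "z ^ Q = to_ac (y ^ Q)" by simp
    also have "\<dots> = to_ac y" unfolding Q_def by (simp only: ff_pow_card)
    finally show "z \<in> S" unfolding S_def using \<open>z = to_ac y\<close> by simp
  qed
  have "card (range (to_ac :: 'l \<Rightarrow> _)) = Q"
    unfolding Q_def by (rule card_image[OF inj_to_ac])
  then have "card S = Q" using card_mono[OF fS sub] cS by linarith
  then have "range to_ac = S" using card_subset_eq[OF fS sub] \<open>card (range to_ac) = Q\<close> by simp
  then show ?thesis using assms unfolding S_def Q_def by auto
qed

lemma deg_eq_coeff:
  assumes "\<forall>n. coeff P n = 0 \<longleftrightarrow> coeff R n = 0"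
  shows "degree P = degree R"
proof (rule antisym)
  show "degree P \<le> degree R" by (rule degree_le) (use assms coeff_eq_0 in auto)
  show "degree R \<le> degree P" by (rule degree_le) (use assms coeff_eq_0 in auto)
qed



lemma coeff_const_if: "coeff [:c:] n = (if n = 0 then c else 0)"
  by (cases n) auto

theorem lemma6:
  fixes p h f :: "'a::{finite,field} poly"
    and \<alpha> :: 'a and d m :: nat
    and \<iota> :: "'a \<Rightarrow> 'l::{finite,field}" and \<theta> :: 'l
  assumes "d \<ge> 5" and "odd d" and "m > 0" and "m dvd d"
    and "lead_coeff p = 1" and "irreducible p" and "degree p = d div m"
    and "\<alpha> \<noteq> 0" and "f = smult \<alpha> (p ^ m)"
    and "h \<noteq> 0" and "degree h \<le> (d - 1) div 2" and "\<not> p dvd h"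
    and "nonsingular_curve h f"
    and "(card (UNIV :: 'l set)) = (card (UNIV :: 'a set)) ^ d"
    and "\<forall>x y. \<iota> (x + y) = \<iota> x + \<iota> y" and "\<forall>x y. \<iota> (x * y) = \<iota> x * \<iota> y" and "\<iota> 1 = 1"
    and "poly (map_poly \<iota> p) \<theta> = 0"
    and "is_drinfeld_rank1 h f \<iota> \<theta> \<phi>"
  shows "\<exists>\<psi>. is_drinfeld_rank1 h f \<iota> \<theta> \<psi> \<and> \<psi> Ybar = monom 1 d \<and>
             Lbar_isomorphic (card (UNIV :: 'a set)) \<phi> \<psi>"
proof -
  define q where "q = card (UNIV :: 'a set)"
  have q2: "q \<ge> 2" unfolding q_def by (rule card_ge2)
  have q0: "q > 0" using q2 by simp
  define Q where "Q = card (UNIV :: 'l set)"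
  have Qd: "Q = q ^ d" using assms(14) unfolding Q_def q_def by simp
  have add: "\<And>a b. \<phi> (hadd a b) = \<phi> a + \<phi> b"
    using assms(19) unfolding is_drinfeld_rank1_def by blast
  have mul: "\<And>a b. \<phi> (hmul h f a b) = ore_mult q (\<phi> a) (\<phi> b)"
    using assms(19) unfolding is_drinfeld_rank1_def q_def by blast
  have one: "\<phi> hone = 1"
    using assms(19) unfolding is_drinfeld_rank1_def by blast
  have cst: "\<And>c. \<phi> ([:c:], 0) = [:\<iota> c:]"
    using assms(19) unfolding is_drinfeld_rank1_def by blast
  have gam: "\<And>a. coeff (\<phi> a) 0 = gamma_map \<iota> \<theta> a"
    using assms(19) unfolding is_drinfeld_rank1_def by blast
  have rk: "\<And>a. a \<noteq> (0, 0) \<Longrightarrow> q ^ degree (\<phi> a) = quot_card h f a"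
    using assms(19) unfolding is_drinfeld_rank1_def q_def by blast

  define e where "e g = coeff (\<phi> (g, 0)) 0" for g
  have e_ev: "e g = poly (map_poly \<iota> g) \<theta>" for g by (simp add: e_def gam gamma_map_def)
  have e_add: "e (a + b) = e a + e b" for a b
    using add[of "(a,0)" "(b,0)"] by (simp add: e_def hadd_def)
  have e_mult: "e (a * b) = e a * e b" for a b
  proof -
    have "hmul h f (a,0) (b,0) = (a * b, 0)" by (simp add: hmul_def)
    then have "\<phi> (a * b, 0) = ore_mult q (\<phi> (a,0)) (\<phi> (b,0))" using mul by metis
    then show ?thesis by (simp add: e_def ore_coeff[OF q0])
  qed
  have e_one: "e 1 = 1" using one by (simp add: e_def hone_def)
  have e_p: "e p = 0" using assms(18) e_ev by simp
  have p0: "p \<noteq> 0" using assms(5) by auto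
  have e_diff: "e (a - b) = e a - e b" for a b
    using e_add[of "a - b" b] by simp
  define kk where "kk = (LEAST k. \<exists>r. r \<noteq> 0 \<and> e r = 0 \<and> degree r = k)"
  have "\<exists>r. r \<noteq> 0 \<and> e r = 0 \<and> degree r = kk"
    unfolding kk_def by (rule LeastI[of _ "degree p"]) (use p0 e_p in auto)
  then obtain r0 where r0: "r0 \<noteq> 0" "e r0 = 0" "degree r0 = kk" by blast
  have r0min: "degree r0 \<le> degree r" if "r \<noteq> 0" "e r = 0" for r
    unfolding r0(3) kk_def by (rule Least_le) (use that in auto)
  have r0dvd: "r0 dvd g" if "e g = 0" for g
  proof -
    have "e g = e (g div r0 * r0) + e (g mod r0)" using e_add by (metis div_mult_mod_eq)
    then have em: "e (g mod r0) = 0" using that e_mult r0(2) by simp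
    have "g mod r0 = 0"
    proof (rule ccontr)
      assume nz: "g mod r0 \<noteq> 0"
      then have "degree (g mod r0) < degree r0" by (rule degree_mod_less'[OF r0(1)])
      moreover have "degree r0 \<le> degree (g mod r0)" by (rule r0min[OF nz em])
      ultimately show False by simp
    qed
    then show ?thesis by (simp add: mod_eq_0_iff_dvd)
  qed
  have edvd: "p dvd g" if "e g = 0" for g
  proof -
    obtain s where s: "p = r0 * s" using r0dvd[OF e_p] by (auto elim: dvdE)
    have "is_unit r0 \<or> is_unit s" using irreducibleD[OF assms(6) s] .
    moreover have "\<not> is_unit r0"
    proof
      assume "is_unit r0"
      then obtain u where "1 = r0 * u" by (auto elim: dvdE)
      then have "e 1 = e r0 * e u" using e_mult by metis
      then show False using e_one r0(2) by simp
    qed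
    ultimately have "is_unit s" by simp
    then have "r0 dvd p" "p dvd r0" using s by (auto simp: mult_unit_dvd_iff')
    then show ?thesis using r0dvd[OF that] dvd_trans by blast
  qed

  define n where "n = degree p"
  have nd: "m * n = d" using assms(4,7) unfolding n_def by simp
  have n0: "n > 0" using nd assms(1) by (cases n) auto
  define Pp where "Pp = \<phi> (p, 0)"
  have lowP: "\<forall>i<n. coeff Pp i = 0"
  proof (rule ccontr)
    assume "\<not> (\<forall>i<n. coeff Pp i = 0)"
    then obtain i where i: "i < n" "coeff Pp i \<noteq> 0" by auto
    define k where "k = (LEAST i. coeff Pp i \<noteq> 0)"
    have ck: "coeff Pp k \<noteq> 0" unfolding k_def by (rule LeastI[of _ i]) (use i in auto)
    have lowk: "\<forall>j<k. coeff Pp j = 0" unfolding k_def using not_less_Least by blast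
    have ki: "k \<le> i" unfolding k_def by (rule Least_le) (use i in auto)
    have k0: "k \<noteq> 0"
    proof
      assume "k = 0"
      then have "coeff Pp 0 \<noteq> 0" using ck by simp
      then show False using e_p by (simp add: e_def Pp_def)
    qed
    have fixp: "e g ^ (q ^ k) = e g" for g
    proof -
      have "hmul h f (g,0) (p,0) = hmul h f (p,0) (g,0)" by (simp add: hmul_def mult.commute)
      then have "ore_mult q (\<phi> (g,0)) Pp = ore_mult q Pp (\<phi> (g,0))" using mul unfolding Pp_def by metis
      then have "coeff (ore_mult q (\<phi> (g,0)) Pp) k = coeff (ore_mult q Pp (\<phi> (g,0))) k" by simp
      then have "e g * coeff Pp k = coeff Pp k * e g ^ (q ^ k)"
        unfolding ore_low_right[OF q0 lowk] ore_low_left[OF q0 lowk] e_def by simp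
      then show ?thesis using ck by (simp add: mult.commute)
    qed
    define Pn where "Pn = {g::'a poly. \<forall>i\<ge>n. coeff g i = 0}"
    have inj: "inj_on e Pn"
    proof (rule inj_onI)
      fix g1 g2 assume g1: "g1 \<in> Pn" and g2: "g2 \<in> Pn" and eq: "e g1 = e g2"
      have "e g1 = e (g1 - g2) + e g2" using e_add[of "g1 - g2" g2] by simp
      then have "e (g1 - g2) = 0" using eq by simp
      then have dv: "p dvd g1 - g2" by (rule edvd)
      show "g1 = g2"
      proof (rule ccontr)
        assume "g1 \<noteq> g2"
        then have nz: "g1 - g2 \<noteq> 0" by simp
        have "n \<le> degree (g1 - g2)" using dvd_imp_degree_le[OF dv nz] unfolding n_def by simp
        then have "coeff (g1 - g2) (degree (g1 - g2)) = 0" using g1 g2 unfolding Pn_def by simp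
        then show False using nz leading_coeff_0_iff by metis
      qed
    qed
    have Nk: "q ^ k \<ge> 2"
    proof -
      have "q ^ 1 \<le> q ^ k" by (rule power_increasing) (use k0 q0 in auto)
      then show ?thesis using q2 by simp
    qed
    have sub: "e ` Pn \<subseteq> {x. x ^ (q ^ k) = x}" using fixp by auto
    have "card (e ` Pn) = card Pn" by (rule card_image[OF inj])
    also have "\<dots> = q ^ n" unfolding Pn_def q_def by (rule card_Pn)
    finally have "card (e ` Pn) = q ^ n" .
    moreover have "card (e ` Pn) \<le> q ^ k"
    proof -
      have "finite {x::'l. x ^ (q ^ k) = x}" "card {x::'l. x ^ (q ^ k) = x} \<le> q ^ k"
        using roots_xN[OF Nk, where 'k='l] by auto
      then show ?thesis using card_mono[OF _ sub] by linarith
    qed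
    ultimately have "q ^ n \<le> q ^ k" by simp
    then have "n \<le> k" using power_le_imp_le_exp[of q n k] q2 by simp
    then show False using ki i by simp
  qed
  have lowpow: "\<forall>i<j*n. coeff (\<phi> (p^j, 0)) i = 0" for j
  proof (induction j)
    case 0 then show ?case by simp
  next
    case (Suc j)
    have "hmul h f (p,0) (p^j,0) = (p ^ Suc j, 0)" by (simp add: hmul_def)
    then have "\<phi> (p ^ Suc j, 0) = ore_mult q Pp (\<phi> (p^j,0))" using mul unfolding Pp_def by metis
    then show ?case using ore_low_bound[OF q0 lowP Suc.IH] by simp
  qed
  have lowF: "\<forall>i<d. coeff (\<phi> (f, 0)) i = 0"
  proof -
    have "hmul h f ([:\<alpha>:],0) (p^m,0) = (f, 0)" by (simp add: hmul_def assms(9))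
    then have "\<phi> (f, 0) = ore_mult q (\<phi> ([:\<alpha>:],0)) (\<phi> (p^m,0))" using mul by metis
    moreover have z: "\<forall>i<0. coeff (\<phi> ([:\<alpha>:],0)) i = 0" by simp
    ultimately show ?thesis using ore_low_bound[OF q0 z lowpow[of m]] nd by simp
  qed
  have eh: "e h \<noteq> 0" using edvd assms(12) by blast
  define T where "T = \<phi> (h, 1)"
  have T0: "coeff T 0 = e h" by (simp add: T_def gam e_ev gamma_map_def)
  have YT: "\<phi> (f, 0) = ore_mult q (\<phi> Ybar) T"
  proof -
    have "hmul h f Ybar (h, 1) = (f, 0)" by (simp add: hmul_def Ybar_def)
    then show ?thesis using mul unfolding T_def by metis
  qed
  have lowY: "\<forall>i<d. coeff (\<phi> Ybar) i = 0"
  proof (rule ccontr)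
    assume "\<not> (\<forall>i<d. coeff (\<phi> Ybar) i = 0)"
    then obtain i where i: "i < d" "coeff (\<phi> Ybar) i \<noteq> 0" by auto
    define k where "k = (LEAST i. coeff (\<phi> Ybar) i \<noteq> 0)"
    have ck: "coeff (\<phi> Ybar) k \<noteq> 0" unfolding k_def by (rule LeastI[of _ i]) (use i in auto)
    have lowk: "\<forall>j<k. coeff (\<phi> Ybar) j = 0" unfolding k_def using not_less_Least by blast
    have ki: "k \<le> i" unfolding k_def by (rule Least_le) (use i in auto)
    have "coeff (\<phi> (f, 0)) k = coeff (\<phi> Ybar) k * coeff T 0 ^ (q ^ k)"
      unfolding YT by (rule ore_low_left[OF q0 lowk])
    moreover have "coeff (\<phi> (f, 0)) k = 0" using lowF ki i by simp
    ultimately show False using ck eh T0 by simp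
  qed
  have f0: "f \<noteq> 0" using assms(8,9) p0 by simp
  have degf: "degree f = d" using assms(8,9) nd unfolding n_def by (simp add: degree_power_eq p0)
  have degY: "degree (\<phi> Ybar) = d"
  proof -
    have "q ^ degree (\<phi> Ybar) = quot_card h f Ybar" by (rule rk) (simp add: Ybar_def)
    also have "\<dots> = q ^ d" using quot_card_Ybar[OF f0, of h] degf q_def by simp
    finally show ?thesis using q2 by (simp add: power_inject_exp)
  qed
  define b where "b = coeff (\<phi> Ybar) d"
  have b0: "b \<noteq> 0"
  proof -
    have "\<phi> Ybar \<noteq> 0" using degY assms(1) by auto
    then show ?thesis unfolding b_def using degY by (metis leading_coeff_0_iff)
  qed
  have Ymon: "\<phi> Ybar = monom b d"
  proof (rule poly_eqI)
    fix k show "coeff (\<phi> Ybar) k = coeff (monom b d) k"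
    proof (cases "k < d")
      case True then show ?thesis using lowY by (simp add: coeff_monom)
    next
      case False
      show ?thesis
      proof (cases "k = d")
        case True then show ?thesis by (simp add: b_def)
      next
        case False
        then have "degree (\<phi> Ybar) < k" using \<open>\<not> k < d\<close> degY by simp
        then show ?thesis using False by (simp add: coeff_eq_0 coeff_monom)
      qed
    qed
  qed
  have monz: "\<forall>i. i \<noteq> d \<longrightarrow> coeff (monom b d) i = 0" by (simp add: coeff_monom)
  have comm: "coeff (\<phi> a) k * b ^ (q ^ k) = b * coeff (\<phi> a) k" for a k
  proof -
    have "hmul h f a Ybar = hmul h f Ybar a" by (simp add: hmul_def Ybar_def algebra_simps)
    then have "ore_mult q (\<phi> a) (monom b d) = ore_mult q (monom b d) (\<phi> a)"
      using mul Ymon by metis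
    then have "coeff (ore_mult q (\<phi> a) (monom b d)) (k + d) = coeff (ore_mult q (monom b d) (\<phi> a)) (k + d)"
      by simp
    then have "coeff (\<phi> a) k * b ^ (q ^ k) = b * coeff (\<phi> a) k ^ (q ^ d)"
      unfolding ore_single_right[OF q0 monz] ore_single_left[OF q0 monz] by simp
    also have "coeff (\<phi> a) k ^ (q ^ d) = coeff (\<phi> a) k"
      unfolding Qd[symmetric] Q_def by (rule ff_pow_card)
    finally show ?thesis .
  qed
  have Q2: "Q \<ge> 2" unfolding Q_def by (rule card_ge2)
  define R :: "'l alg_closure poly" where "R = monom 1 (Q - 1) + [:- to_ac b:]"
  have degR: "degree R = Q - 1"
  proof -
    have "degree [:- to_ac b:] < degree (monom (1::'l alg_closure) (Q - 1))"
      using Q2 by (simp add: degree_monom_eq)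
    then show ?thesis unfolding R_def by (simp add: degree_add_eq_left degree_monom_eq)
  qed
  obtain lam where lamR: "poly R lam = 0"
    using alg_closed_imp_poly_has_root[of R] degR Q2 by auto
  have lamQ1: "lam ^ (Q - 1) = to_ac b" using lamR by (simp add: R_def poly_monom)
  have lam0: "lam \<noteq> 0"
  proof
    assume l: "lam = 0"
    have "to_ac b = 0" using lamQ1 l Q2 by (simp add: power_0_left)
    then show False using b0 by simp
  qed
  have lamQ: "lam ^ Q = lam * to_ac b"
  proof -
    have "Q = Suc (Q - 1)" using Q2 by simp
    then have "lam ^ Q = lam * lam ^ (Q - 1)" by (metis power_Suc)
    then show ?thesis using lamQ1 by simp
  qed
  define mu where "mu = inverse lam"
  have mu0: "mu \<noteq> 0" using lam0 by (simp add: mu_def)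
  have lm: "lam * mu = 1" using lam0 by (simp add: mu_def)
  define \<kappa> where "\<kappa> a k = lam * to_ac (coeff (\<phi> a) k) * mu ^ (q ^ k)" for a k
  have \<kappa>0: "\<kappa> a k = 0 \<longleftrightarrow> coeff (\<phi> a) k = 0" for a k
    using lam0 mu0 by (simp add: \<kappa>_def)
  have kin: "\<kappa> a k \<in> range to_ac" for a k
  proof (cases "coeff (\<phi> a) k = 0")
    case True
    then have "\<kappa> a k = to_ac 0" by (simp add: \<kappa>_def)
    then show ?thesis by simp
  next
    case False
    define A where "A = coeff (\<phi> a) k"
    have bq: "b ^ (q ^ k) = b" using comm[of a k] False by simp
    have AQ: "to_ac A ^ Q = to_ac A" unfolding Q_def by (simp flip: to_ac_power add: ff_pow_card)
    have muQ: "mu ^ Q = inverse (lam * to_ac b)" using lamQ by (simp add: mu_def power_inverse)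
    have "(mu ^ (q ^ k)) ^ Q = (mu ^ Q) ^ (q ^ k)" by (simp add: power_mult[symmetric] mult.commute)
    also have "\<dots> = inverse (lam * to_ac b) ^ (q ^ k)" using muQ by simp
    also have "\<dots> = mu ^ (q ^ k) * inverse (to_ac (b ^ (q ^ k)))"
      by (simp add: mu_def power_inverse power_mult_distrib)
    also have "\<dots> = mu ^ (q ^ k) * inverse (to_ac b)" using bq by simp
    finally have mq: "(mu ^ (q ^ k)) ^ Q = mu ^ (q ^ k) * inverse (to_ac b)" .
    have "\<kappa> a k ^ Q = lam ^ Q * to_ac A ^ Q * (mu ^ (q ^ k)) ^ Q"
      by (simp add: \<kappa>_def A_def power_mult_distrib)
    also have "\<dots> = (lam * to_ac b) * to_ac A * (mu ^ (q ^ k) * inverse (to_ac b))"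
      using lamQ AQ mq by simp
    also have "\<dots> = \<kappa> a k" using b0 by (simp add: \<kappa>_def A_def field_simps)
    finally have "\<kappa> a k ^ Q = \<kappa> a k" .
    then show ?thesis unfolding Q_def by (rule fixed_in_range)
  qed
  define \<psi> where "\<psi> a = (\<Sum>i\<le>degree (\<phi> a). monom (of_ac (\<kappa> a i)) i)" for a
  have psic: "to_ac (coeff (\<psi> a) k) = \<kappa> a k" for a k
  proof -
    have "coeff (\<psi> a) k = (\<Sum>i\<le>degree (\<phi> a). if i = k then of_ac (\<kappa> a i) else 0)"
      unfolding \<psi>_def coeff_sum by (rule sum.cong) (auto simp: coeff_monom)
    also have "\<dots> = (if k \<le> degree (\<phi> a) then of_ac (\<kappa> a k) else 0)"
      by (simp add: sum.delta')
    finally have c: "coeff (\<psi> a) k = (if k \<le> degree (\<phi> a) then of_ac (\<kappa> a k) else 0)" .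
    show ?thesis
    proof (cases "k \<le> degree (\<phi> a)")
      case True then show ?thesis using c to_ac_of_ac[OF kin[of a k]] by simp
    next
      case False
      then have "coeff (\<phi> a) k = 0" by (simp add: coeff_eq_0)
      then show ?thesis using c False \<kappa>0 by simp
    qed
  qed
  have psi_eqI: "P = Rr" if "\<And>k. to_ac (coeff P k) = to_ac (coeff Rr k)" for P Rr :: "'l poly"
    by (rule poly_eqI) (use that in simp)
  have degpsi: "degree (\<psi> a) = degree (\<phi> a)" for a
  proof (rule deg_eq_coeff, intro allI)
    fix k
    have "coeff (\<psi> a) k = 0 \<longleftrightarrow> to_ac (coeff (\<psi> a) k) = 0" by simp
    also have "\<dots> \<longleftrightarrow> coeff (\<phi> a) k = 0" unfolding psic \<kappa>0 ..
    finally show "coeff (\<psi> a) k = 0 \<longleftrightarrow> coeff (\<phi> a) k = 0" .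
  qed
  have psi0: "coeff (\<psi> a) 0 = coeff (\<phi> a) 0" for a
  proof -
    have "to_ac (coeff (\<psi> a) 0) = to_ac (coeff (\<phi> a) 0)"
      unfolding psic \<kappa>_def using lm by (simp add: mult.commute)
    then show ?thesis by simp
  qed
  have D1: "\<psi> (hadd a c) = \<psi> a + \<psi> c" for a c
    by (rule psi_eqI) (simp add: psic \<kappa>_def add algebra_simps)
  have D2: "\<psi> (hmul h f a c) = ore_mult q (\<psi> a) (\<psi> c)" for a c
  proof (rule psi_eqI)
    fix k
    have "to_ac (coeff (ore_mult q (\<psi> a) (\<psi> c)) k)
        = (\<Sum>i\<le>k. \<kappa> a i * \<kappa> c (k - i) ^ (q ^ i))"
      by (simp add: ore_coeff[OF q0] to_ac_sum psic)
    also have "\<dots> = (\<Sum>i\<le>k. lam * (to_ac (coeff (\<phi> a) i) * to_ac (coeff (\<phi> c) (k - i)) ^ (q ^ i)) * mu ^ (q ^ k))"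
    proof (rule sum.cong)
      fix i assume "i \<in> {..k}"
      then have ik: "q ^ (k - i) * q ^ i = q ^ k" by (simp flip: power_add)
      have ml: "mu ^ (q ^ i) * lam ^ (q ^ i) = 1" using lm by (simp flip: power_mult_distrib add: mult.commute)
      have "\<kappa> a i * \<kappa> c (k - i) ^ (q ^ i)
          = lam * to_ac (coeff (\<phi> a) i) * mu ^ (q ^ i) * (lam ^ (q ^ i) * to_ac (coeff (\<phi> c) (k - i)) ^ (q ^ i) * mu ^ (q ^ (k - i) * q ^ i))"
        by (simp add: \<kappa>_def power_mult_distrib power_mult)
      also have "\<dots> = lam * to_ac (coeff (\<phi> a) i) * (mu ^ (q ^ i) * lam ^ (q ^ i)) * to_ac (coeff (\<phi> c) (k - i)) ^ (q ^ i) * mu ^ (q ^ k)"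
        unfolding ik by (simp add: mult_ac)
      also have "\<dots> = lam * (to_ac (coeff (\<phi> a) i) * to_ac (coeff (\<phi> c) (k - i)) ^ (q ^ i)) * mu ^ (q ^ k)"
        unfolding ml by (simp add: mult_ac)
      finally show "\<kappa> a i * \<kappa> c (k - i) ^ (q ^ i) = lam * (to_ac (coeff (\<phi> a) i) * to_ac (coeff (\<phi> c) (k - i)) ^ (q ^ i)) * mu ^ (q ^ k)" .
    qed simp
    also have "\<dots> = \<kappa> (hmul h f a c) k"
      by (simp add: \<kappa>_def mul ore_coeff[OF q0] to_ac_sum sum_distrib_left sum_distrib_right)
    finally show "to_ac (coeff (\<psi> (hmul h f a c)) k) = to_ac (coeff (ore_mult q (\<psi> a) (\<psi> c)) k)"
      by (simp add: psic)
  qed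
  have D3: "\<psi> hone = 1"
  proof (rule psi_eqI)
    fix k show "to_ac (coeff (\<psi> hone) k) = to_ac (coeff 1 k)"
      using lm by (cases k) (simp_all add: psic \<kappa>_def one coeff_1)
  qed
  have D4: "\<psi> ([:c:], 0) = [:\<iota> c:]" for c
  proof (rule psi_eqI)
    fix k show "to_ac (coeff (\<psi> ([:c:], 0)) k) = to_ac (coeff [:\<iota> c:] k)"
      using lm by (cases k) (simp_all add: psic \<kappa>_def cst coeff_const_if mult.commute)
  qed
  have D5: "coeff (\<psi> a) 0 = gamma_map \<iota> \<theta> a" for a using psi0 gam by simp
  have D6: "\<exists>a. degree (\<psi> a) > 0"
  proof
    show "degree (\<psi> Ybar) > 0" using degpsi[of Ybar] degY assms(1) by simp
  qed
  have D7: "a \<noteq> (0, 0) \<Longrightarrow> q ^ degree (\<psi> a) = quot_card h f a" for a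
    using rk degpsi by simp
  have DY: "\<psi> Ybar = monom 1 d"
  proof (rule psi_eqI)
    fix k
    have "\<kappa> Ybar d = 1"
    proof -
      have "mu ^ (q ^ d) = inverse (lam * to_ac b)" using lamQ Qd by (simp add: mu_def power_inverse)
      moreover have "to_ac b \<noteq> 0" using b0 by simp
      ultimately show ?thesis using lam0 by (simp add: \<kappa>_def Ymon field_simps)
    qed
    then show "to_ac (coeff (\<psi> Ybar) k) = to_ac (coeff (monom 1 d) k)"
      by (cases "k = d") (simp_all add: psic \<kappa>_def Ymon coeff_monom)
  qed
  have DL: "Lbar_isomorphic q \<phi> \<psi>"
    unfolding Lbar_isomorphic_def
  proof (intro exI conjI allI)
    show "lam \<noteq> 0" by (rule lam0)
    fix a
    show "ore_mult q (ore_mult q [:lam:] (map_poly to_ac (\<phi> a))) [:inverse lam:] = map_poly to_ac (\<psi> a)"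
    proof (rule poly_eqI)
      fix k
      have z1: "\<forall>i. i \<noteq> 0 \<longrightarrow> coeff [:inverse lam:] i = 0" by (simp add: coeff_const_if)
      have z2: "\<forall>i. i \<noteq> 0 \<longrightarrow> coeff [:lam:] i = 0" by (simp add: coeff_const_if)
      show "coeff (ore_mult q (ore_mult q [:lam:] (map_poly to_ac (\<phi> a))) [:inverse lam:]) k = coeff (map_poly to_ac (\<psi> a)) k"
        unfolding ore_single_right[OF q0 z1] ore_single_left[OF q0 z2]
        by (simp add: coeff_map_poly psic \<kappa>_def mu_def)
    qed
  qed
  have "is_drinfeld_rank1 h f \<iota> \<theta> \<psi>"
    unfolding is_drinfeld_rank1_def q_def[symmetric]
    using D1 D2 D3 D4 D5 D6 D7 by blast
  then show ?thesis using DY DL unfolding q_def by blast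
qed

end
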